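(* Let $\Psi$ be an essentially single-valued, rent monotone, Pareto indifferent selection from the envy-free set. Let $u\in\mathcal{B}^N$, $m\in\mathbb{R}$, $(r,\sigma)\in\Psi(N,A,u,m)$, and let $\mu$ be a minimum weight perfect matching in $\mathcal{F}^u_\kappa(r)$. Then there is $\varepsilon>0$ such that for each $\delta\in[0,\varepsilon]$ there is $(r^\delta,\mu)\in\Psi(N,A,u,m+\delta)$.
   Context: Fix a finite set $\{\rho_1,\dots,\rho_k\}\subseteq\mathbb{R}_+$ with $\rho_1=0$. $N=\{1,\dots,n\}$ agents, $A$ a set of $n$ rooms. $\mathcal{B}$ is the set of utility functions $u_i(r_a,a)=v^i_a-r_a-\rho_i\max\{0,r_a-b_i\}$ with $v^i\in\mathbb{R}^A$, $b_i\ge0$, $\rho_i\in\{\rho_1,\dots,\rho_k\}$. An allocation for $(N,A,u,m)$ is $(r,\sigma)$ with $\sigma:N\to A$ a bijection, $r\in\mathbb{R}^A$, $\sum_ar_a=m$; envy-free means $u_i(r_{\sigma(i)},\sigma(i))\ge u_i(r_{\sigma(j)},\sigma(j))$ for all $i,j$; $F(N,A,u,m)$ is the set of envy-free allocations. A selection $\Psi$ assigns to each economy $(N,A,u,m)$ a subset $\Psi(N,A,u,m)\subseteq F(N,A,u,m)$. It is essentially single-valued if each agent is indifferent between any two allocations in $\Psi(N,A,u,m)$; rent monotone if (being essentially single-valued) for each $i$ the utility $u_i(r_{\sigma(i)},\sigma(i))$ at $(r,\sigma)\in\Psi(N,A,u,m)$ is strictly decreasing in $m$; Pareto indifferent if whenever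 $(r,\sigma)\in\Psi(N,A,u,m)$ and $(t,\mu)$ is an allocation with $u_i(t_{\mu(i)},\mu(i))=u_i(r_{\sigma(i)},\sigma(i))$ for all $i$, then $(t,\mu)\in\Psi(N,A,u,m)$. $\kappa_{ia}(u,r)=1+\rho_i$ if $r_a\ge b_i$ and $1$ otherwise (absolute marginal disutility of an increase of rent of room $a$). For $r$ with some envy-free $(r,\sigma)$, $\mathcal{F}(r)$ is the bipartite graph on $N\cup A$ with edge $(i,a)$ iff $u_i(r_{\sigma(i)},\sigma(i))=u_i(r_a,a)$, and $\mathcal{F}^u_\kappa(r)$ has weights $w(i,a)=\log\kappa_{ia}(u,r)$; a minimum weight perfect matching is a bijection $\mu:N\to A$ using only edges of $\mathcal{F}(r)$ minimizing $\sum_iw(i,\mu(i))$ among such. *)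

theory Defs
  imports Complex_Main
begin

text \<open>Agents are the elements of a finite type 'n, rooms the elements of a finite
type 'a (with equally many elements). A utility profile is
u :: 'n => real => 'a => real, where u i x a is agent i's utility for room a at rent x.\<close>

type_synonym ('n,'a) profile = "'n \<Rightarrow> real \<Rightarrow> 'a \<Rightarrow> real"
type_synonym ('n,'a) alloc = "('a \<Rightarrow> real) \<times> ('n \<Rightarrow> 'a)"

definition qlu :: "('n \<Rightarrow> 'a \<Rightarrow> real) \<Rightarrow> ('n \<Rightarrow> real) \<Rightarrow> ('n \<Rightarrow> real) \<Rightarrow> ('n,'a) profile" where
  "qlu v b \<rho> = (\<lambda>i x a. v i a - x - \<rho> i * max 0 (x - b i))"

text \<open>The domain B^N of utility profiles, for the fixed finite set P of penalty rates.\<close>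
definition profiles_B :: "real set \<Rightarrow> ('n,'a) profile set" where
  "profiles_B P = {u. \<exists>v b \<rho>. (\<forall>i. b i \<ge> 0 \<and> \<rho> i \<in> P) \<and> u = qlu v b \<rho>}"

definition is_alloc :: "real \<Rightarrow> ('n,'a) alloc \<Rightarrow> bool" where
  "is_alloc m al \<longleftrightarrow> bij (snd al) \<and> (\<Sum>a\<in>UNIV. fst al a) = m"

definition util :: "('n,'a) profile \<Rightarrow> ('n,'a) alloc \<Rightarrow> 'n \<Rightarrow> real" where
  "util u al i = u i (fst al (snd al i)) (snd al i)"

definition envy_free :: "('n,'a) profile \<Rightarrow> real \<Rightarrow> ('n,'a) alloc \<Rightarrow> bool" where
  "envy_free u m al \<longleftrightarrow> is_alloc m al \<and>
     (\<forall>i j. u i (fst al (snd al i)) (snd al i) \<ge> u i (fst al (snd al j)) (snd al j))"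

definition EF :: "('n,'a) profile \<Rightarrow> real \<Rightarrow> ('n,'a) alloc set" where
  "EF u m = {al. envy_free u m al}"

definition selection :: "real set \<Rightarrow> (('n::finite,'a::finite) profile \<Rightarrow> real \<Rightarrow> ('n,'a) alloc set) \<Rightarrow> bool" where
  "selection P \<Psi> \<longleftrightarrow> (\<forall>u\<in>profiles_B P. \<forall>m. \<Psi> u m \<subseteq> EF u m \<and> \<Psi> u m \<noteq> {})"

definition ess_single_valued :: "real set \<Rightarrow> (('n,'a) profile \<Rightarrow> real \<Rightarrow> ('n,'a) alloc set) \<Rightarrow> bool" where
  "ess_single_valued P \<Psi> \<longleftrightarrow> (\<forall>u\<in>profiles_B P. \<forall>m. \<forall>al\<in>\<Psi> u m. \<forall>al'\<in>\<Psi> u m.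
      \<forall>i. util u al i = util u al' i)"

definition rent_monotone :: "real set \<Rightarrow> (('n,'a) profile \<Rightarrow> real \<Rightarrow> ('n,'a) alloc set) \<Rightarrow> bool" where
  "rent_monotone P \<Psi> \<longleftrightarrow> ess_single_valued P \<Psi> \<and>
     (\<forall>u\<in>profiles_B P. \<forall>m m'. m < m' \<longrightarrow> (\<forall>al\<in>\<Psi> u m. \<forall>al'\<in>\<Psi> u m'.
        \<forall>i. util u al' i < util u al i))"

definition pareto_indifferent :: "real set \<Rightarrow> (('n,'a) profile \<Rightarrow> real \<Rightarrow> ('n,'a) alloc set) \<Rightarrow> bool" where
  "pareto_indifferent P \<Psi> \<longleftrightarrow> (\<forall>u\<in>profiles_B P. \<forall>m. \<forall>al\<in>\<Psi> u m. \<forall>al'.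
      is_alloc m al' \<and> (\<forall>i. util u al' i = util u al i) \<longrightarrow> al' \<in> \<Psi> u m)"

definition kappa :: "('n \<Rightarrow> real) \<Rightarrow> ('n \<Rightarrow> real) \<Rightarrow> ('a \<Rightarrow> real) \<Rightarrow> 'n \<Rightarrow> 'a \<Rightarrow> real" where
  "kappa b \<rho> r i a = (if r a \<ge> b i then 1 + \<rho> i else 1)"

text \<open>Edges of the graph F(r), defined from an envy-free allocation (r, sigma).\<close>
definition F_edge :: "('n,'a) profile \<Rightarrow> ('a \<Rightarrow> real) \<Rightarrow> ('n \<Rightarrow> 'a) \<Rightarrow> 'n \<Rightarrow> 'a \<Rightarrow> bool" where
  "F_edge u r \<sigma> i a \<longleftrightarrow> u i (r (\<sigma> i)) (\<sigma> i) = u i (r a) a"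

definition perfect_matching_F :: "('n,'a) profile \<Rightarrow> ('a \<Rightarrow> real) \<Rightarrow> ('n \<Rightarrow> 'a) \<Rightarrow> ('n \<Rightarrow> 'a) \<Rightarrow> bool" where
  "perfect_matching_F u r \<sigma> \<mu> \<longleftrightarrow> bij \<mu> \<and> (\<forall>i. F_edge u r \<sigma> i (\<mu> i))"

definition min_weight_pm :: "('n \<Rightarrow> 'a \<Rightarrow> real) \<Rightarrow> ('n \<Rightarrow> real) \<Rightarrow> ('n \<Rightarrow> real) \<Rightarrow> ('a \<Rightarrow> real)
     \<Rightarrow> ('n::finite \<Rightarrow> 'a) \<Rightarrow> ('n \<Rightarrow> 'a) \<Rightarrow> bool" where
  "min_weight_pm v b \<rho> r \<sigma> \<mu> \<longleftrightarrow> perfect_matching_F (qlu v b \<rho>) r \<sigma> \<mu> \<and>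
     (\<forall>\<mu>'. perfect_matching_F (qlu v b \<rho>) r \<sigma> \<mu>' \<longrightarrow>
        (\<Sum>i\<in>UNIV. ln (kappa b \<rho> r i (\<mu> i))) \<le> (\<Sum>i\<in>UNIV. ln (kappa b \<rho> r i (\<mu>' i))))"

end

theory Submission
  imports Defs
begin

lemma qlu_lin:
  fixes x d bi p vv :: real
  assumes "0 \<le> d" "x < bi \<Longrightarrow> x + d \<le> bi"
  shows "vv - (x + d) - p * max 0 (x + d - bi) = vv - x - p * max 0 (x - bi) - (if x \<ge> bi then 1 + p else 1) * d"
proof (cases "x \<ge> bi")
  case True
  then show ?thesis using assms by (simp add: max_def algebra_simps)
next
  case False
  then show ?thesis using assms by (simp add: max_def algebra_simps)
qed

lemma qlu_mono:
  fixes x y bi p vv :: real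
  assumes "x \<le> y" "p \<ge> 0"
  shows "vv - y - p * max 0 (y - bi) \<le> vv - x - p * max 0 (x - bi)"
proof -
  have "max 0 (x - bi) \<le> max 0 (y - bi)" using assms by simp
  then have "p * max 0 (x - bi) \<le> p * max 0 (y - bi)" using assms by (simp add: mult_left_mono)
  then show ?thesis using assms by simp
qed

theorem lemma6:
  fixes P :: "real set"
    and \<Psi> :: "('n::finite,'a::finite) profile \<Rightarrow> real \<Rightarrow> ('n,'a) alloc set"
    and v :: "'n \<Rightarrow> 'a \<Rightarrow> real" and b \<rho> :: "'n \<Rightarrow> real"
    and m :: real and r :: "'a \<Rightarrow> real" and \<sigma> \<mu> :: "'n \<Rightarrow> 'a"
  assumes card: "card (UNIV :: 'n set) = card (UNIV :: 'a set)"
    and P_fin: "finite P" and P_nonneg: "\<forall>p\<in>P. p \<ge> 0" and P_zero: "0 \<in> P"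
    and sel: "selection P \<Psi>"
    and esv: "ess_single_valued P \<Psi>"
    and rm: "rent_monotone P \<Psi>"
    and pi: "pareto_indifferent P \<Psi>"
    and b_nonneg: "\<forall>i. b i \<ge> 0" and \<rho>_P: "\<forall>i. \<rho> i \<in> P"
    and in_sel: "(r, \<sigma>) \<in> \<Psi> (qlu v b \<rho>) m"
    and mwpm: "min_weight_pm v b \<rho> r \<sigma> \<mu>"
  shows "\<exists>\<epsilon>>0. \<forall>\<delta>\<in>{0..\<epsilon>}. \<exists>r'. (r', \<mu>) \<in> \<Psi> (qlu v b \<rho>) (m + \<delta>)"
proof -
  obtain u where u_def: "u = qlu v b \<rho>" by blast
  have uB: "u \<in> profiles_B P" using b_nonneg \<rho>_P unfolding u_def profiles_B_def by blast
  have \<rho>0: "\<And>i. \<rho> i \<ge> 0" using P_nonneg \<rho>_P by blast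
  have uu: "\<And>i x a. u i x a = v i a - x - \<rho> i * max 0 (x - b i)" unfolding u_def qlu_def by simp
  have umono: "\<And>i x y a. x \<le> y \<Longrightarrow> u i y a \<le> u i x a"
    unfolding uu using qlu_mono \<rho>0 by blast
  have in_sel': "(r, \<sigma>) \<in> \<Psi> u m" using in_sel u_def by simp
  have rEF: "envy_free u m (r,\<sigma>)" using sel in_sel' uB unfolding selection_def EF_def by blast
  then have bij\<sigma>: "bij \<sigma>" and sumr: "sum r UNIV = m"
    and efr: "\<forall>i j. u i (r (\<sigma> j)) (\<sigma> j) \<le> u i (r (\<sigma> i)) (\<sigma> i)"
    by (auto simp: envy_free_def is_alloc_def)
  define U0 where "U0 i = u i (r (\<sigma> i)) (\<sigma> i)" for i
  have efr': "u i (r a) a \<le> U0 i" for i a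
  proof -
    have "\<sigma> (inv \<sigma> a) = a" using surj_f_inv_f[OF bij_is_surj[OF bij\<sigma>]] by blast
    then show ?thesis using efr[rule_format, of i "inv \<sigma> a"] unfolding U0_def by simp
  qed
  define K where "K i a = kappa b \<rho> r i a" for i a
  have Kge: "K i a \<ge> 1" for i a using \<rho>0[of i] unfolding K_def kappa_def by simp
  have Kle: "K i a \<le> 1 + \<rho> i" for i a using \<rho>0[of i] unfolding K_def kappa_def by simp
  have pm\<mu>: "perfect_matching_F u r \<sigma> \<mu>" and
    minw: "\<And>\<mu>'. perfect_matching_F u r \<sigma> \<mu>' \<Longrightarrow>
        (\<Sum>i\<in>UNIV. ln (K i (\<mu> i))) \<le> (\<Sum>i\<in>UNIV. ln (K i (\<mu>' i)))"
    using mwpm unfolding min_weight_pm_def u_def K_def by auto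
  have bij\<mu>: "bij \<mu>" and edge\<mu>: "\<And>i. u i (r (\<mu> i)) (\<mu> i) = U0 i"
    using pm\<mu> unfolding perfect_matching_F_def F_edge_def U0_def by auto
  define e where "e i a = min (if u i (r a) a < U0 i then (U0 i - u i (r a) a)/(1+\<rho> i) else 1)
      (if r a < b i then b i - r a else 1)" for i a
  have epos: "e i a > 0" for i a
    using \<rho>0[of i] unfolding e_def by auto
  define \<epsilon> where "\<epsilon> = Min (range (\<lambda>p. e (fst p) (snd p)))"
  have fin: "finite (range (\<lambda>p. e (fst p) (snd p)))" by simp
  have \<epsilon>pos: "\<epsilon> > 0" unfolding \<epsilon>_def using fin epos by (subst Min_gr_iff) auto
  have \<epsilon>le: "\<epsilon> \<le> e i a" for i a
  proof -
    have "e i a \<in> range (\<lambda>p. e (fst p) (snd p))" by (rule range_eqI[of _ _ "(i,a)"]) simp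
    then show ?thesis unfolding \<epsilon>_def using fin by simp
  qed
  have main: "\<exists>r'. (r', \<mu>) \<in> \<Psi> u (m + \<delta>)" if \<delta>: "\<delta> \<in> {0..\<epsilon>}" for \<delta>
  proof (cases "\<delta> = 0")
    case True
    have "is_alloc m (r, \<mu>)" using bij\<mu> sumr by (simp add: is_alloc_def)
    moreover have "\<forall>i. util u (r,\<mu>) i = util u (r,\<sigma>) i"
      using edge\<mu> by (simp add: util_def U0_def)
    ultimately have "(r, \<mu>) \<in> \<Psi> u m" using pi uB in_sel' unfolding pareto_indifferent_def by blast
    then show ?thesis using True by auto
  next
    case False
    then have \<delta>pos: "\<delta> > 0" and \<delta>le: "\<delta> \<le> \<epsilon>" using \<delta> by auto
    obtain al where al: "al \<in> \<Psi> u (m + \<delta>)" using sel uB unfolding selection_def by blast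
    obtain s \<tau> where al_eq: "al = (s, \<tau>)" by (cases al)
    have s\<tau>: "(s,\<tau>) \<in> \<Psi> u (m+\<delta>)" using al al_eq by simp
    have sEF: "envy_free u (m+\<delta>) (s,\<tau>)" using sel s\<tau> uB unfolding selection_def EF_def by blast
    then have bij\<tau>: "bij \<tau>" and sums: "sum s UNIV = m + \<delta>"
      and efs: "\<forall>i j. u i (s (\<tau> j)) (\<tau> j) \<le> u i (s (\<tau> i)) (\<tau> i)"
      by (auto simp: envy_free_def is_alloc_def)
    have efs': "u i (s a) a \<le> u i (s (\<tau> i)) (\<tau> i)" for i a
    proof -
      have "\<tau> (inv \<tau> a) = a" using surj_f_inv_f[OF bij_is_surj[OF bij\<tau>]] by blast
      then show ?thesis using efs[rule_format, of i "inv \<tau> a"] by simp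
    qed
    have lt: "u i (s (\<tau> i)) (\<tau> i) < U0 i" for i
    proof -
      have "m < m + \<delta>" using \<delta>pos by simp
      then have "util u (s,\<tau>) i < util u (r,\<sigma>) i"
        using rm uB in_sel' s\<tau> unfolding rent_monotone_def by blast
      then show ?thesis by (simp add: util_def U0_def)
    qed
    define d where "d a = s a - r a" for a
    have dpos: "d a > 0" for a
    proof -
      define i where "i = inv \<sigma> a"
      have ti: "\<sigma> i = a" unfolding i_def using surj_f_inv_f[OF bij_is_surj[OF bij\<sigma>]] by blast
      have "u i (s a) a < u i (r a) a" using lt[of i] efs'[of i a] ti unfolding U0_def by simp
      then have "\<not> s a \<le> r a" using umono[of "s a" "r a" i a] by linarith
      then show ?thesis unfolding d_def by simp
    qed
    have sumd: "sum d UNIV = \<delta>" unfolding d_def using sums sumr by (simp add: sum_subtractf)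
    have dle: "d a \<le> \<delta>" for a
    proof -
      have "d a \<le> sum d UNIV" by (rule member_le_sum) (simp_all add: less_imp_le[OF dpos])
      then show ?thesis using sumd by simp
    qed
    have dle\<epsilon>: "d a \<le> \<epsilon>" for a using dle[of a] \<delta>le by simp
    have lin: "u i (s a) a = u i (r a) a - K i a * d a" for i a
    proof -
      have sa: "s a = r a + d a" unfolding d_def by simp
      have c: "r a < b i \<Longrightarrow> r a + d a \<le> b i"
        using dle\<epsilon>[of a] \<epsilon>le[of i a] unfolding e_def by auto
      show ?thesis unfolding sa uu K_def kappa_def
        using qlu_lin[OF less_imp_le[OF dpos[of a]] c] by simp
    qed
    have \<tau>edge: "u i (r (\<tau> i)) (\<tau> i) = U0 i" for i
    proof (rule ccontr)
      assume ne: "u i (r (\<tau> i)) (\<tau> i) \<noteq> U0 i"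
      define gap where "gap = U0 i - u i (r (\<tau> i)) (\<tau> i)"
      have gp: "gap > 0" using ne efr'[of i "\<tau> i"] unfolding gap_def by simp
      have "\<epsilon> \<le> gap / (1 + \<rho> i)" using \<epsilon>le[of i "\<tau> i"] ne efr'[of i "\<tau> i"]
        unfolding e_def gap_def by auto
      then have g1: "(1 + \<rho> i) * \<epsilon> \<le> gap" using \<rho>0[of i]
        by (simp add: pos_le_divide_eq mult.commute)
      have "K i (\<sigma> i) * d (\<sigma> i) \<le> (1 + \<rho> i) * d (\<sigma> i)"
        using Kle dpos by (simp add: mult_right_mono less_imp_le)
      also have "\<dots> \<le> (1 + \<rho> i) * \<epsilon>" using dle\<epsilon> \<rho>0[of i] by (simp add: mult_left_mono)
      finally have g2: "K i (\<sigma> i) * d (\<sigma> i) \<le> gap" using g1 by simp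
      have "u i (s (\<sigma> i)) (\<sigma> i) = U0 i - K i (\<sigma> i) * d (\<sigma> i)" using lin U0_def by simp
      moreover have "u i (s (\<tau> i)) (\<tau> i) = U0 i - gap - K i (\<tau> i) * d (\<tau> i)"
        using lin gap_def by simp
      moreover have "K i (\<tau> i) * d (\<tau> i) > 0" using Kge[of i "\<tau> i"] dpos[of "\<tau> i"] by simp
      ultimately have "u i (s (\<tau> i)) (\<tau> i) < u i (s (\<sigma> i)) (\<sigma> i)" using g2 by simp
      then show False using efs'[of i "\<sigma> i"] by simp
    qed
    have pm\<tau>: "perfect_matching_F u r \<sigma> \<tau>"
      using bij\<tau> \<tau>edge unfolding perfect_matching_F_def F_edge_def U0_def by simp
    have mw: "(\<Sum>i\<in>UNIV. ln (K i (\<mu> i))) \<le> (\<Sum>i\<in>UNIV. ln (K i (\<tau> i)))" using minw[OF pm\<tau>] .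
    have ineq: "K i (\<tau> i) * d (\<tau> i) \<le> K i (\<mu> i) * d (\<mu> i)" for i
      using efs'[of i "\<mu> i"] lin[of i "\<mu> i"] lin[of i "\<tau> i"] edge\<mu>[of i] \<tau>edge[of i] by simp
    define f where "f i = ln (K i (\<tau> i)) + ln (d (\<tau> i))" for i
    define g where "g i = ln (K i (\<mu> i)) + ln (d (\<mu> i))" for i
    have Kp: "K i a > 0" for i a using Kge[of i a] by simp
    have fg: "f i = ln (K i (\<tau> i) * d (\<tau> i))" "g i = ln (K i (\<mu> i) * d (\<mu> i))" for i
      unfolding f_def g_def using Kp[THEN less_imp_neq, THEN not_sym] dpos[THEN less_imp_neq, THEN not_sym] by (simp_all add: ln_mult)
    have fleg: "f i \<le> g i" for i unfolding fg using ineq[of i] Kp dpos by simp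
    have r1: "(\<Sum>i\<in>UNIV. ln (d (\<tau> i))) = (\<Sum>a\<in>UNIV. ln (d a))"
      using sum.reindex_bij_betw[OF bij\<tau>, of "\<lambda>a. ln (d a)"] by simp
    have r2: "(\<Sum>i\<in>UNIV. ln (d (\<mu> i))) = (\<Sum>a\<in>UNIV. ln (d a))"
      using sum.reindex_bij_betw[OF bij\<mu>, of "\<lambda>a. ln (d a)"] by simp
    have "(\<Sum>i\<in>UNIV. g i - f i) = (\<Sum>i\<in>UNIV. ln (K i (\<mu> i))) - (\<Sum>i\<in>UNIV. ln (K i (\<tau> i)))"
      unfolding f_def g_def using r1 r2 by (simp add: sum_subtractf sum.distrib)
    then have s0: "(\<Sum>i\<in>UNIV. g i - f i) \<le> 0" using mw by simp
    have "(\<Sum>i\<in>UNIV. g i - f i) \<ge> 0" by (rule sum_nonneg) (use fleg in auto)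
    then have "(\<Sum>i\<in>UNIV. g i - f i) = 0" using s0 by simp
    then have "\<forall>i\<in>UNIV. g i - f i = 0" by (subst sum_nonneg_eq_0_iff[symmetric]) (use fleg in auto)
    then have eqfg: "f i = g i" for i by simp
    have eqK: "K i (\<tau> i) * d (\<tau> i) = K i (\<mu> i) * d (\<mu> i)" for i
      using eqfg[of i] unfolding fg using Kp dpos by (simp add: ln_inj_iff)
    have ueq: "u i (s (\<mu> i)) (\<mu> i) = u i (s (\<tau> i)) (\<tau> i)" for i
      using lin[of i "\<mu> i"] lin[of i "\<tau> i"] edge\<mu>[of i] \<tau>edge[of i] eqK[of i] by simp
    have "is_alloc (m+\<delta>) (s, \<mu>)" using bij\<mu> sums by (simp add: is_alloc_def)
    moreover have "\<forall>i. util u (s,\<mu>) i = util u (s,\<tau>) i" using ueq by (simp add: util_def)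
    ultimately have "(s, \<mu>) \<in> \<Psi> u (m+\<delta>)" using pi uB s\<tau> unfolding pareto_indifferent_def by blast
    then show ?thesis by blast
  qed
  show ?thesis unfolding u_def[symmetric] using \<epsilon>pos main by blast
qed

end
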